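(* For every integer $\omega$, there is a proof labeling scheme of size $O(\log n)$ for the class $\mathcal{G}_\omega$ of all graphs $G$ such that each connected component of $G$ admits an elimination tree of width at most $\omega$ which is a spanning tree of (i.e., a subgraph of) that component.
   Context: An elimination tree of a connected graph $G$ is a rooted tree $F$ with $V(F)=V(G)$ such that for every edge $uv$ of $G$, one of $u,v$ is an ancestor of the other in $F$. For $v\in V(F)$ let $F_v$ be the subtree rooted at $v$ and let $\mathsf{str}(v)$ consist of $v$ together with all strict ancestors of $v$ that have a neighbour (in $G$) in $V(F_v)$. The width of $F$ is $\max_v|\mathsf{str}(v)|-1$. Each vertex has a unique identifier in $\{1,\dots,n\}$. A proof labeling scheme for a class $\Pi$: a prover assigns binary labels to vertices; a verifier at $v$ sees only $\mathsf{id}(v)$ and $(\mathsf{id}(w),\varphi(w))$ for $w\in N[v]$ and outputs Yes/No; completeness: on graphs in $\Pi$ the prover's labels make all vertices output Yes; soundness: on graphs not in $\Pi$, for every labeling some vertex outputs No. Size $O(\log n)$: all labels have length $O(\log n)$. *)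

theory Defs
  imports Complex_Main
begin

text \<open>Graphs: the vertices are identified with their unique identifiers, so a graph on n
vertices has vertex set {1..n}; E is a symmetric irreflexive adjacency relation on {1..n}.\<close>
definition graph :: "nat \<Rightarrow> (nat \<Rightarrow> nat \<Rightarrow> bool) \<Rightarrow> bool" where
  "graph n E \<longleftrightarrow> (\<forall>u v. E u v \<longrightarrow> u \<in> {1..n} \<and> v \<in> {1..n} \<and> u \<noteq> v \<and> E v u)"

definition component :: "nat \<Rightarrow> (nat \<Rightarrow> nat \<Rightarrow> bool) \<Rightarrow> nat \<Rightarrow> nat set" where
  "component n E v = {u \<in> {1..n}. (v, u) \<in> {(a, b). E a b}\<^sup>*}"

text \<open>A rooted tree on vertex set C with root r, given by a parent function p
(p v is the parent of v for v \<noteq> r).  The pair (v, p v) is a child-parent pair.\<close>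
definition par_rel :: "nat set \<Rightarrow> nat \<Rightarrow> (nat \<Rightarrow> nat) \<Rightarrow> (nat \<times> nat) set" where
  "par_rel C r p = {(v, p v) | v. v \<in> C \<and> v \<noteq> r}"

definition rooted_tree :: "nat set \<Rightarrow> nat \<Rightarrow> (nat \<Rightarrow> nat) \<Rightarrow> bool" where
  "rooted_tree C r p \<longleftrightarrow> r \<in> C \<and> (\<forall>v \<in> C - {r}. p v \<in> C)
     \<and> (\<forall>v \<in> C. (v, r) \<in> (par_rel C r p)\<^sup>*)"

text \<open>(v, a) in the transitive closure of par_rel means: a is a strict ancestor of v.\<close>
definition elimination_tree :: "(nat \<Rightarrow> nat \<Rightarrow> bool) \<Rightarrow> nat set \<Rightarrow> nat \<Rightarrow> (nat \<Rightarrow> nat) \<Rightarrow> bool" where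
  "elimination_tree E C r p \<longleftrightarrow> rooted_tree C r p \<and>
     (\<forall>u \<in> C. \<forall>v \<in> C. E u v \<longrightarrow> (u, v) \<in> (par_rel C r p)\<^sup>+ \<or> (v, u) \<in> (par_rel C r p)\<^sup>+)"

definition subtree :: "nat set \<Rightarrow> nat \<Rightarrow> (nat \<Rightarrow> nat) \<Rightarrow> nat \<Rightarrow> nat set" where
  "subtree C r p v = {u \<in> C. (u, v) \<in> (par_rel C r p)\<^sup>*}"

definition str :: "(nat \<Rightarrow> nat \<Rightarrow> bool) \<Rightarrow> nat set \<Rightarrow> nat \<Rightarrow> (nat \<Rightarrow> nat) \<Rightarrow> nat \<Rightarrow> nat set" where
  "str E C r p v = {v} \<union> {a. (v, a) \<in> (par_rel C r p)\<^sup>+ \<and> (\<exists>u \<in> subtree C r p v. E a u)}"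

definition width_le :: "(nat \<Rightarrow> nat \<Rightarrow> bool) \<Rightarrow> nat set \<Rightarrow> nat \<Rightarrow> (nat \<Rightarrow> nat) \<Rightarrow> int \<Rightarrow> bool" where
  "width_le E C r p \<omega> \<longleftrightarrow> (\<forall>v \<in> C. int (card (str E C r p v)) - 1 \<le> \<omega>)"

definition tree_in_graph :: "(nat \<Rightarrow> nat \<Rightarrow> bool) \<Rightarrow> nat set \<Rightarrow> nat \<Rightarrow> (nat \<Rightarrow> nat) \<Rightarrow> bool" where
  "tree_in_graph E C r p \<longleftrightarrow> (\<forall>v \<in> C - {r}. E v (p v))"

definition G_class :: "int \<Rightarrow> nat \<Rightarrow> (nat \<Rightarrow> nat \<Rightarrow> bool) \<Rightarrow> bool" where
  "G_class \<omega> n E \<longleftrightarrow> (\<forall>v \<in> {1..n}. \<exists>r p.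
      elimination_tree E (component n E v) r p \<and> tree_in_graph E (component n E v) r p
      \<and> width_le E (component n E v) r p \<omega>)"

definition view :: "(nat \<Rightarrow> nat \<Rightarrow> bool) \<Rightarrow> (nat \<Rightarrow> bool list) \<Rightarrow> nat \<Rightarrow> (nat \<times> bool list) set" where
  "view E lab v = {(w, lab w) | w. w = v \<or> E v w}"

definition pls_log :: "(nat \<Rightarrow> (nat \<Rightarrow> nat \<Rightarrow> bool) \<Rightarrow> bool) \<Rightarrow> bool" where
  "pls_log P \<longleftrightarrow> (\<exists>(D :: nat \<Rightarrow> (nat \<times> bool list) set \<Rightarrow> bool) (c :: real).
     (\<forall>n E. graph n E \<longrightarrow> P n E \<longrightarrow>
        (\<exists>lab :: nat \<Rightarrow> bool list.
           (\<forall>v \<in> {1..n}. real (length (lab v)) \<le> c * (log 2 (real n) + 1)) \<and>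
           (\<forall>v \<in> {1..n}. D v (view E lab v)))) \<and>
     (\<forall>n E. graph n E \<longrightarrow> \<not> P n E \<longrightarrow>
        (\<forall>lab :: nat \<Rightarrow> bool list. \<exists>v \<in> {1..n}. \<not> D v (view E lab v))))"

end

theory Submission
  imports Defs
begin

fun binl :: "nat \<Rightarrow> bool list" where
  "binl x = (if x = 0 then [] else odd x # binl (x div 2))"
declare binl.simps[simp del]

fun unbinl :: "bool list \<Rightarrow> nat" where
  "unbinl [] = 0" | "unbinl (b # bs) = (if b then 1 else 0) + 2 * unbinl bs"

lemma unbinl_binl: "unbinl (binl x) = x"
proof (induction x rule: binl.induct)
  case (1 x)
  show ?case
  proof (cases "x = 0")
    case True then show ?thesis by (simp add: binl.simps)
  next
    case False
    then have "binl x = odd x # binl (x div 2)" by (simp add: binl.simps)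
    with 1 False show ?thesis by simp
  qed
qed

fun decL :: "bool list \<Rightarrow> bool list \<Rightarrow> nat list" where
  "decL acc [] = []"
| "decL acc [True] = []"
| "decL acc (True # b # rest) = decL (acc @ [b]) rest"
| "decL acc (False # rest) = unbinl acc # decL [] rest"

definition encN :: "nat \<Rightarrow> bool list" where
  "encN x = concat (map (\<lambda>b. [True, b]) (binl x)) @ [False]"
definition encL :: "nat list \<Rightarrow> bool list" where
  "encL xs = concat (map encN xs)"

lemma decL_step: "decL acc (concat (map (\<lambda>b. [True,b]) bs) @ False # rest) = unbinl (acc @ bs) # decL [] rest"
  by (induction bs arbitrary: acc) auto

lemma decL_encL: "decL [] (encL xs) = xs"
  by (induction xs) (auto simp: encL_def encN_def decL_step unbinl_binl)

lemma len_pairs: "length (concat (map (\<lambda>b. [True, b]) bs)) = 2 * length bs"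
  by (induction bs) auto

lemma binl_pow: "0 < x \<Longrightarrow> 2 ^ length (binl x) \<le> 2 * x"
proof (induction x rule: binl.induct)
  case (1 x)
  then have bx: "binl x = odd x # binl (x div 2)" by (simp add: binl.simps)
  show ?case
  proof (cases "x div 2 = 0")
    case True
    then show ?thesis using bx 1(2) by (simp add: binl.simps)
  next
    case False
    then have "2 ^ length (binl (x div 2)) \<le> 2 * (x div 2)" using 1 by simp
    then have "2 ^ length (binl x) \<le> 4 * (x div 2)" using bx by simp
    also have "\<dots> \<le> 2 * x" by simp
    finally show ?thesis .
  qed
qed

lemma binl_log: assumes "x \<le> n" "1 \<le> n" shows "real (length (binl x)) \<le> log 2 (real n) + 1"
proof (cases "x = 0")
  case True
  then show ?thesis using assms by (simp add: binl.simps)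
next
  case False
  then have "(2::nat) ^ length (binl x) \<le> 2 * n" using binl_pow[of x] assms by simp
  then have "(2::real) powr real (length (binl x)) \<le> 2 * real n"
    by (simp add: powr_realpow) (metis of_nat_le_iff of_nat_mult of_nat_numeral of_nat_power)
  then have "real (length (binl x)) \<le> log 2 (2 * real n)"
    using assms by (subst le_log_iff) auto
  also have "\<dots> = log 2 (real n) + 1" using assms by (simp add: log_mult)
  finally show ?thesis .
qed

lemma encL_len: "(\<forall>x\<in>set L. real (length (binl x)) \<le> B) \<Longrightarrow> real (length (encL L)) \<le> real (length L) * (2*B+1)"
  by (induction L) (auto simp: encL_def encN_def len_pairs algebra_simps)


definition anc :: "nat set \<Rightarrow> nat \<Rightarrow> (nat \<Rightarrow> nat) \<Rightarrow> nat \<Rightarrow> nat set" where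
  "anc C r p x = {a. (x, a) \<in> (par_rel C r p)\<^sup>+}"
definition dep :: "nat set \<Rightarrow> nat \<Rightarrow> (nat \<Rightarrow> nat) \<Rightarrow> nat \<Rightarrow> nat" where
  "dep C r p x = card (anc C r p x)"

locale et =
  fixes E :: "nat \<Rightarrow> nat \<Rightarrow> bool" and C :: "nat set" and r :: nat and p :: "nat \<Rightarrow> nat"
  assumes el: "elimination_tree E C r p" and fin: "finite C" and sym: "\<And>u v. E u v \<Longrightarrow> E v u"
begin

abbreviation "P \<equiv> par_rel C r p"

lemma rt: "rooted_tree C r p" using el by (simp add: elimination_tree_def)

lemma P_iff: "(x,y) \<in> P \<longleftrightarrow> x \<in> C \<and> x \<noteq> r \<and> y = p x" by (auto simp: par_rel_def)
lemma r_in: "r \<in> C" using rt by (simp add: rooted_tree_def)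
lemma p_in: "x \<in> C \<Longrightarrow> x \<noteq> r \<Longrightarrow> p x \<in> C" using rt by (simp add: rooted_tree_def)
lemma reach: "x \<in> C \<Longrightarrow> (x,r) \<in> P\<^sup>*" using rt by (simp add: rooted_tree_def)
lemma trancl_C: "(x,y) \<in> P\<^sup>+ \<Longrightarrow> x \<in> C \<and> y \<in> C"
  by (induct rule: trancl_induct) (auto simp: P_iff p_in)

lemma cyc: assumes "(x,y) \<in> P\<^sup>*" "(x,x) \<in> P\<^sup>+" shows "(y,x) \<in> P\<^sup>*"
  using assms(1)
proof (induct rule: rtrancl_induct)
  case base show ?case by simp
next
  case (step y z)
  from step.hyps(2) have yz: "z = p y" by (auto simp: P_iff)
  have "(y,x) \<in> P\<^sup>+"
  proof (cases "y = x")
    case True then show ?thesis using assms(2) by simp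
  next
    case False then show ?thesis using step.hyps(3) by (simp add: rtrancl_eq_or_trancl)
  qed
  then obtain w where "(y,w) \<in> P" "(w,x) \<in> P\<^sup>*" by (blast dest: tranclD)
  then show ?case using yz by (auto simp: P_iff)
qed

lemma no_r: "(r, y) \<notin> P\<^sup>+"
proof
  assume "(r,y) \<in> P\<^sup>+"
  then obtain w where "(r,w) \<in> P" by (blast dest: tranclD)
  then show False by (simp add: P_iff)
qed

lemma acyc: "(x,x) \<notin> P\<^sup>+"
proof
  assume h: "(x,x) \<in> P\<^sup>+"
  then have "x \<in> C" using trancl_C by blast
  then have "(x,r) \<in> P\<^sup>*" by (rule reach)
  then have "(r,x) \<in> P\<^sup>*" using cyc h by blast
  then have "(r,x) \<in> P\<^sup>+" using h by (auto simp: rtrancl_eq_or_trancl)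
  then show False using no_r by blast
qed

lemma pne: "x \<in> C \<Longrightarrow> x \<noteq> r \<Longrightarrow> p x \<noteq> x"
  using acyc[of x] by (auto simp: P_iff)

lemma anc_fin: "finite (anc C r p x)"
  by (rule finite_subset[OF _ fin]) (auto simp: anc_def dest: trancl_C)

lemma anc_r: "anc C r p r = {}" using no_r by (auto simp: anc_def)

lemma anc_step: assumes "x \<in> C" "x \<noteq> r" shows "anc C r p x = insert (p x) (anc C r p (p x))"
proof -
  have xp: "(x, p x) \<in> P" using assms by (simp add: P_iff)
  have "(x,a) \<in> P\<^sup>+ \<longleftrightarrow> (p x, a) \<in> P\<^sup>*" for a
  proof
    assume "(x,a) \<in> P\<^sup>+"
    then obtain w where "(x,w) \<in> P" "(w,a) \<in> P\<^sup>*" by (blast dest: tranclD)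
    then show "(p x, a) \<in> P\<^sup>*" by (auto simp: P_iff)
  next
    assume "(p x, a) \<in> P\<^sup>*"
    then show "(x,a) \<in> P\<^sup>+" using xp by (meson rtrancl_into_trancl2)
  qed
  then show ?thesis by (auto simp: anc_def rtrancl_eq_or_trancl)
qed

lemma dep_step: "x \<in> C \<Longrightarrow> x \<noteq> r \<Longrightarrow> dep C r p x = Suc (dep C r p (p x))"
  unfolding dep_def using anc_step anc_fin acyc[of "p x"]
  by (simp add: anc_def)

lemma dep_r: "dep C r p r = 0" by (simp add: dep_def anc_r)

lemma dep_less: "(x,y) \<in> P\<^sup>+ \<Longrightarrow> dep C r p y < dep C r p x"
proof (induct rule: trancl_induct)
  case (base y) then show ?case by (auto simp: P_iff dep_step)
next
  case (step y z) then show ?case by (auto simp: P_iff dep_step)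
qed

lemma dep_le: "dep C r p x \<le> card C"
  unfolding dep_def by (rule card_mono[OF fin]) (auto simp: anc_def dest: trancl_C)

lemma str_sub: "v \<in> C \<Longrightarrow> str E C r p v \<subseteq> C"
  by (auto simp: str_def dest: trancl_C)

lemma str_r: "str E C r p r = {r}" using no_r by (auto simp: str_def)

lemma str_step: assumes "v \<in> C" "v \<noteq> r" shows "str E C r p v \<subseteq> insert v (str E C r p (p v))"
proof
  fix a assume a: "a \<in> str E C r p v"
  show "a \<in> insert v (str E C r p (p v))"
  proof (cases "a = v")
    case True then show ?thesis by simp
  next
    case False
    then have va: "(v,a) \<in> P\<^sup>+" and "\<exists>u\<in>subtree C r p v. E a u" using a by (auto simp: str_def)
    then obtain u where u: "u \<in> C" "(u,v) \<in> P\<^sup>*" "E a u" by (auto simp: subtree_def)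
    obtain w where "(v,w) \<in> P" "(w,a) \<in> P\<^sup>*" using va by (blast dest: tranclD)
    then have w: "w = p v" "(p v, a) \<in> P\<^sup>*" by (auto simp: P_iff)
    show ?thesis
    proof (cases "a = p v")
      case True then show ?thesis by (simp add: str_def)
    next
      case False
      then have "(p v, a) \<in> P\<^sup>+" using w by (auto simp: rtrancl_eq_or_trancl)
      moreover have "(u, p v) \<in> P\<^sup>*" using u assms by (meson P_iff rtrancl_into_rtrancl)
      ultimately show ?thesis using u by (auto simp: str_def subtree_def)
    qed
  qed
qed

lemma elim: "u \<in> C \<Longrightarrow> v \<in> C \<Longrightarrow> E u v \<Longrightarrow> (u,v) \<in> P\<^sup>+ \<or> (v,u) \<in> P\<^sup>+"
  using el by (simp add: elimination_tree_def)

lemma dep_ne: "v \<in> C \<Longrightarrow> w \<in> C \<Longrightarrow> E v w \<Longrightarrow> dep C r p w \<noteq> dep C r p v"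
  using elim[of v w] dep_less by fastforce

lemma str_nb: assumes "v \<in> C" "w \<in> C" "E v w" "dep C r p w < dep C r p v"
  shows "w \<in> str E C r p v"
proof -
  have "(v,w) \<in> P\<^sup>+" using elim[OF assms(1-3)] dep_less assms(4) by fastforce
  moreover have "v \<in> subtree C r p v" using assms by (simp add: subtree_def)
  ultimately show ?thesis using sym[OF assms(3)] by (auto simp: str_def)
qed

end

definition fR :: "bool list \<Rightarrow> nat" where "fR l = decL [] l ! 0"
definition fP :: "bool list \<Rightarrow> nat" where "fP l = decL [] l ! 1"
definition fD :: "bool list \<Rightarrow> nat" where "fD l = decL [] l ! 2"
definition fS :: "bool list \<Rightarrow> nat set" where "fS l = set (drop 3 (decL [] l))"

definition check :: "int \<Rightarrow> nat \<Rightarrow> bool list \<Rightarrow> (nat \<times> bool list) set \<Rightarrow> bool" where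
  "check \<omega> v lv V \<longleftrightarrow> v \<in> fS lv \<and> int (length (drop 3 (decL [] lv))) \<le> \<omega> + 1 \<and>
    (fP lv = v \<longrightarrow> fR lv = v \<and> fD lv = 0 \<and> fS lv = {v}) \<and>
    (fP lv \<noteq> v \<longrightarrow> (\<exists>lp. (fP lv, lp) \<in> V \<and> fD lp + 1 = fD lv \<and> fS lv \<subseteq> insert v (fS lp))) \<and>
    (\<forall>w lw. (w, lw) \<in> V \<longrightarrow> w \<noteq> v \<longrightarrow> fR lw = fR lv \<and> fD lw \<noteq> fD lv \<and> (fD lw < fD lv \<longrightarrow> w \<in> fS lv))"

definition Dver :: "int \<Rightarrow> nat \<Rightarrow> (nat \<times> bool list) set \<Rightarrow> bool" where
  "Dver \<omega> v V \<longleftrightarrow> (\<forall>lv. (v, lv) \<in> V \<longrightarrow> check \<omega> v lv V)"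

lemma view_iff: "(w, l) \<in> view E lab v \<longleftrightarrow> (w = v \<or> E v w) \<and> l = lab w"
  by (auto simp: view_def)

locale sd =
  fixes n :: nat and E :: "nat \<Rightarrow> nat \<Rightarrow> bool" and lab :: "nat \<Rightarrow> bool list" and \<omega> :: int
  assumes g: "graph n E" and acc: "\<And>v. v \<in> {1..n} \<Longrightarrow> Dver \<omega> v (view E lab v)"
begin

definition "Rt v = fR (lab v)"
definition "pa v = fP (lab v)"
definition "de v = fD (lab v)"
definition "Sx v = fS (lab v)"

lemma Eg: "E u v \<Longrightarrow> u \<in> {1..n} \<and> v \<in> {1..n} \<and> u \<noteq> v \<and> E v u"
  using g by (auto simp: graph_def)

lemma chk: "v \<in> {1..n} \<Longrightarrow> check \<omega> v (lab v) (view E lab v)"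
  using acc by (auto simp: Dver_def view_iff)

lemma vS: "v \<in> {1..n} \<Longrightarrow> v \<in> Sx v"
  using chk by (auto simp: check_def Sx_def)

lemma cardS: "v \<in> {1..n} \<Longrightarrow> int (card (Sx v)) \<le> \<omega> + 1"
proof -
  assume v: "v \<in> {1..n}"
  have "card (Sx v) \<le> length (drop 3 (decL [] (lab v)))" unfolding Sx_def fS_def by (rule card_length)
  then show ?thesis using chk[OF v] by (simp add: check_def)
qed

lemma finS: "finite (Sx v)" by (simp add: Sx_def fS_def)

lemma rootc: "v \<in> {1..n} \<Longrightarrow> pa v = v \<Longrightarrow> Rt v = v \<and> de v = 0 \<and> Sx v = {v}"
  using chk by (auto simp: check_def Sx_def pa_def Rt_def de_def)

lemma parc: assumes "v \<in> {1..n}" "pa v \<noteq> v"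
  shows "E v (pa v) \<and> de (pa v) + 1 = de v \<and> Sx v \<subseteq> insert v (Sx (pa v))"
  using chk[OF assms(1)] assms(2) by (auto simp: check_def Sx_def pa_def Rt_def de_def view_iff)

lemma nbc: assumes "v \<in> {1..n}" "E v w"
  shows "Rt w = Rt v \<and> de w \<noteq> de v \<and> (de w < de v \<longrightarrow> w \<in> Sx v)"
proof -
  have "(w, lab w) \<in> view E lab v" "w \<noteq> v" using assms Eg by (auto simp: view_iff)
  then show ?thesis using chk[OF assms(1)] by (auto simp: check_def Sx_def pa_def Rt_def de_def)
qed

lemma sound_comp: assumes v0: "v0 \<in> {1..n}"
  shows "\<exists>r p. elimination_tree E (component n E v0) r p \<and> tree_in_graph E (component n E v0) r p
      \<and> width_le E (component n E v0) r p \<omega>"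
proof -
  define C where "C = component n E v0"
  have Cin: "u \<in> C \<Longrightarrow> u \<in> {1..n}" for u by (simp add: C_def component_def)
  have Ccl: "u \<in> C \<Longrightarrow> E u w \<Longrightarrow> w \<in> C" for u w
    using Eg[of u w] by (auto simp: C_def component_def intro: rtrancl_into_rtrancl)
  have v0C: "v0 \<in> C" using v0 by (simp add: C_def component_def)
  have Rconst: "Rt u = Rt v0" if "u \<in> C" for u
  proof -
    have "(v0,u) \<in> {(a,b). E a b}\<^sup>*" using that by (simp add: C_def component_def)
    then show ?thesis
    proof (induct rule: rtrancl_induct)
      case base then show ?case by simp
    next
      case (step y z)
      then have "E y z" by simp
      then show ?case using nbc[of y z] Eg[of y z] step.hyps(3) by auto
    qed
  qed
  have reach: "\<exists>\<rho>\<in>C. pa \<rho> = \<rho>" if "w \<in> C" for w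
    using that
  proof (induction "de w" arbitrary: w rule: less_induct)
    case less
    show ?case
    proof (cases "pa w = w")
      case True with less.prems show ?thesis by blast
    next
      case False
      from parc[OF Cin[OF less.prems] False] have "E w (pa w)" "de (pa w) + 1 = de w" by auto
      then have "pa w \<in> C" "de (pa w) < de w" using Ccl less.prems by auto
      then show ?thesis using less.hyps by blast
    qed
  qed
  define r where "r = Rt v0"
  obtain \<rho> where \<rho>: "\<rho> \<in> C" "pa \<rho> = \<rho>" using reach[OF v0C] by blast
  have "\<rho> = r" using rootc[OF Cin[OF \<rho>(1)] \<rho>(2)] Rconst[OF \<rho>(1)] by (simp add: r_def)
  then have rC: "r \<in> C" and pr: "pa r = r" using \<rho> by auto
  have key: "u \<in> C \<Longrightarrow> pa u = u \<longleftrightarrow> u = r" for u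
    using rootc[OF Cin] Rconst pr by (auto simp: r_def)
  define P where "P = par_rel C r pa"
  have P_iff: "(x,y) \<in> P \<longleftrightarrow> x \<in> C \<and> x \<noteq> r \<and> y = pa x" for x y by (auto simp: P_def par_rel_def)
  have Pstep: "E x (pa x) \<and> pa x \<in> C \<and> de (pa x) + 1 = de x \<and> Sx x \<subseteq> insert x (Sx (pa x))"
    if "x \<in> C" "x \<noteq> r" for x
    using parc[OF Cin[OF that(1)]] key[OF that(1)] that Ccl by auto
  have Ptr: "(x,y) \<in> P\<^sup>+ \<Longrightarrow> x \<in> C \<and> y \<in> C \<and> de y < de x" for x y
  proof (induct rule: trancl_induct)
    case (base y) then show ?case using Pstep by (fastforce simp: P_iff)
  next
    case (step y z) then show ?case using Pstep by (fastforce simp: P_iff)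
  qed
  have rooted: "(x,r) \<in> P\<^sup>*" if "x \<in> C" for x
    using that
  proof (induction "de x" arbitrary: x rule: less_induct)
    case less
    show ?case
    proof (cases "x = r")
      case True then show ?thesis by simp
    next
      case False
      have h: "E x (pa x) \<and> pa x \<in> C \<and> de (pa x) + 1 = de x" using Pstep[of x] less.prems False by blast
      then have "(x, pa x) \<in> P" "pa x \<in> C" "de (pa x) < de x" using less.prems False by (auto simp: P_iff)
      then show ?thesis using less.hyps by (meson converse_rtrancl_into_rtrancl)
    qed
  qed
  have lemA: "(u,a) \<in> P\<^sup>+" if "u \<in> C" "a \<in> Sx u" "a \<noteq> u" for u a
    using that
  proof (induction "de u" arbitrary: u rule: less_induct)
    case less
    show ?case
    proof (cases "u = r")
      case True then show ?thesis using less.prems rootc[OF Cin[OF rC] pr] by auto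
    next
      case False
      then have h: "(u, pa u) \<in> P" "pa u \<in> C" "de (pa u) < de u" "a \<in> Sx (pa u)"
        using Pstep[of u] less.prems by (auto simp: P_iff)
      show ?thesis
      proof (cases "a = pa u")
        case True then show ?thesis using h by auto
      next
        case False
        then have "(pa u, a) \<in> P\<^sup>+" using less.hyps h by blast
        then show ?thesis using h by (meson trancl_into_trancl2)
      qed
    qed
  qed
  have lemB: "(u,x) \<in> P\<^sup>* \<Longrightarrow> u \<in> C \<Longrightarrow> a \<in> Sx u \<Longrightarrow> (x,a) \<in> P\<^sup>+ \<Longrightarrow> a \<in> Sx x" for u x a
  proof (induct rule: rtrancl_induct)
    case base then show ?case by simp
  next
    case (step y z)
    have yz: "y \<in> C" "y \<noteq> r" "z = pa y" using step.hyps(2) by (auto simp: P_iff)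
    have "(y,a) \<in> P\<^sup>+" using step.hyps(2) step.prems(3) by (meson trancl_into_trancl2)
    then have "a \<in> Sx y" "de a < de y" using step.hyps(3) step.prems Ptr by auto
    then show ?case using Pstep[OF yz(1,2)] yz(3) by auto
  qed
  have ET: "elimination_tree E C r pa"
    unfolding elimination_tree_def rooted_tree_def P_def[symmetric]
  proof (intro conjI ballI impI)
    show "r \<in> C" by (rule rC)
  next
    fix v assume "v \<in> C - {r}" then show "pa v \<in> C" using Pstep by auto
  next
    fix v assume "v \<in> C" then show "(v, r) \<in> P\<^sup>*" by (rule rooted)
  next
    fix u v assume uv: "u \<in> C" "v \<in> C" "E u v"
    have ne: "u \<noteq> v" using Eg uv by blast
    have nb: "de v \<noteq> de u \<and> (de v < de u \<longrightarrow> v \<in> Sx u)" using nbc[OF Cin[OF uv(1)] uv(3)] by auto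
    show "(u, v) \<in> P\<^sup>+ \<or> (v, u) \<in> P\<^sup>+"
    proof (cases "de v < de u")
      case True then show ?thesis using nb lemA uv ne by auto
    next
      case False
      then have "de u < de v" using nb by auto
      moreover have "E v u" using Eg uv by blast
      ultimately have "u \<in> Sx v" using nbc[OF Cin[OF uv(2)]] by auto
      then show ?thesis using lemA uv ne by auto
    qed
  qed
  have TG: "tree_in_graph E C r pa" using Pstep by (auto simp: tree_in_graph_def)
  have WL: "width_le E C r pa \<omega>" unfolding width_le_def
  proof
    fix v assume vC: "v \<in> C"
    have "str E C r pa v \<subseteq> Sx v"
    proof
      fix a assume a: "a \<in> str E C r pa v"
      show "a \<in> Sx v"
      proof (cases "a = v")
        case True then show ?thesis using vS Cin vC by auto
      next
        case False
        then have va: "(v,a) \<in> P\<^sup>+" and "\<exists>u\<in>subtree C r pa v. E a u" using a by (auto simp: str_def P_def)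
        then obtain u where u: "u \<in> C" "(u,v) \<in> P\<^sup>*" "E a u" by (auto simp: subtree_def P_def)
        have ua: "(u,a) \<in> P\<^sup>+" using u(2) va by (rule rtrancl_trancl_trancl)
        then have "de a < de u" using Ptr by blast
        moreover have "E u a" using Eg u by blast
        ultimately have "a \<in> Sx u" using nbc[OF Cin[OF u(1)]] by auto
        then show ?thesis using lemB[OF u(2) u(1) _ va] by blast
      qed
    qed
    then have "card (str E C r pa v) \<le> card (Sx v)" using finS by (rule card_mono[rotated])
    then show "int (card (str E C r pa v)) - 1 \<le> \<omega>" using cardS[OF Cin[OF vC]] by linarith
  qed
  show ?thesis using ET TG WL unfolding C_def by blast
qed

lemma sound: "G_class \<omega> n E"
  unfolding G_class_def using sound_comp by blast

end

definition good :: "int \<Rightarrow> (nat \<Rightarrow> nat \<Rightarrow> bool) \<Rightarrow> nat set \<Rightarrow> nat \<Rightarrow> (nat \<Rightarrow> nat) \<Rightarrow> bool" where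
  "good \<omega> E C r p \<longleftrightarrow> elimination_tree E C r p \<and> tree_in_graph E C r p \<and> width_le E C r p \<omega>"

lemma comp_same:
  assumes g: "graph n E" and u: "u \<in> component n E v"
  shows "component n E u = component n E v"
proof -
  let ?R = "{(a,b). E a b}"
  have symR: "?R\<inverse> = ?R" using g by (auto simp: graph_def)
  have vu: "(v,u) \<in> ?R\<^sup>*" using u by (simp add: component_def)
  then have "(u,v) \<in> (?R\<inverse>)\<^sup>*" by (rule rtrancl_converseI)
  then have uv: "(u,v) \<in> ?R\<^sup>*" using symR by simp
  show ?thesis unfolding component_def using vu uv by (meson rtrancl_trans)
qed

locale cp =
  fixes n :: nat and E :: "nat \<Rightarrow> nat \<Rightarrow> bool" and \<omega> :: int
  assumes g: "graph n E" and G: "G_class \<omega> n E"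
begin

definition "pk C = (SOME rp. good \<omega> E C (fst rp) (snd rp))"
definition "rr v = fst (pk (component n E v))"
definition "pp v = snd (pk (component n E v))"
definition "Lv v = [rr v, if v = rr v then v else pp v v, dep (component n E v) (rr v) (pp v) v]
   @ sorted_list_of_set (str E (component n E v) (rr v) (pp v) v)"
definition "lab v = encL (Lv v)"

lemma Eg: "E u v \<Longrightarrow> u \<in> {1..n} \<and> v \<in> {1..n} \<and> u \<noteq> v \<and> E v u"
  using g by (auto simp: graph_def)

lemma good: "v \<in> {1..n} \<Longrightarrow> good \<omega> E (component n E v) (rr v) (pp v)"
proof -
  assume "v \<in> {1..n}"
  then have "\<exists>rp. good \<omega> E (component n E v) (fst rp) (snd rp)"
    using G by (auto simp: G_class_def good_def)
  then show ?thesis unfolding rr_def pp_def pk_def by (rule someI_ex)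
qed

lemma same: "u \<in> component n E v \<Longrightarrow> rr u = rr v \<and> pp u = pp v \<and> component n E u = component n E v"
  using comp_same[OF g] by (simp add: rr_def pp_def)

lemma fin: "finite (component n E v)"
  by (rule finite_subset[of _ "{1..n}"]) (auto simp: component_def)

lemma csub: "component n E v \<subseteq> {1..n}" by (auto simp: component_def)

lemma closed: "u \<in> component n E v \<Longrightarrow> E u w \<Longrightarrow> w \<in> component n E v"
  using Eg[of u w] by (auto simp: component_def intro: rtrancl_into_rtrancl)

lemma self: "v \<in> {1..n} \<Longrightarrow> v \<in> component n E v" by (simp add: component_def)

lemma et: "v \<in> {1..n} \<Longrightarrow> et E (component n E v) (rr v) (pp v)"
  using good[of v] fin[of v] Eg by (auto simp: good_def et_def)

lemma dec_lab: "decL [] (lab v) = Lv v" by (simp add: lab_def decL_encL)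

lemma accept: assumes v: "v \<in> {1..n}" shows "Dver \<omega> v (view E lab v)"
proof -
  define C where "C = component n E v"
  define r where "r = rr v"
  define p where "p = pp v"
  interpret T: et E C r p using et[OF v] by (simp add: C_def r_def p_def)
  have vC: "v \<in> C" using self[OF v] by (simp add: C_def)
  have Lw: "Lv w = [r, if w = r then w else p w, dep C r p w] @ sorted_list_of_set (str E C r p w)"
    if "w \<in> C" for w
    using same[of w v] that by (simp add: Lv_def C_def r_def p_def)
  have fins: "finite (str E C r p w)" if "w \<in> C" for w
    using T.str_sub[OF that] T.fin by (rule finite_subset)
  have fl: "fR (lab w) = r" "fP (lab w) = (if w = r then w else p w)" "fD (lab w) = dep C r p w"
    "fS (lab w) = str E C r p w" "drop 3 (decL [] (lab w)) = sorted_list_of_set (str E C r p w)"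
    if "w \<in> C" for w
    using Lw[OF that] fins[OF that] by (simp_all add: fR_def fP_def fD_def fS_def dec_lab)
  have wl: "width_le E C r p \<omega>" using good[OF v] by (simp add: good_def C_def r_def p_def)
  show ?thesis unfolding Dver_def
  proof (intro allI impI)
    fix lv assume "(v, lv) \<in> view E lab v"
    then have lv: "lv = lab v" by (simp add: view_iff)
    show "check \<omega> v lv (view E lab v)"
      unfolding check_def lv fl[OF vC]
    proof (intro conjI impI allI)
      show "v \<in> str E C r p v" by (simp add: str_def)
      show "int (length (sorted_list_of_set (str E C r p v))) \<le> \<omega> + 1"
      proof -
        have "int (card (str E C r p v)) - 1 \<le> \<omega>" using wl vC unfolding width_le_def by blast
        then show ?thesis by simp
      qed
    next
      assume "(if v = r then v else p v) = v"
      then have "v = r" using T.pne vC by (auto split: if_splits)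
      then show "r = v" "dep C r p v = 0" "str E C r p v = {v}" using T.dep_r T.str_r by auto
    next
      assume h: "(if v = r then v else p v) \<noteq> v"
      then have vr: "v \<noteq> r" by auto
      have pC: "p v \<in> C" using T.p_in vC vr by blast
      have "E v (p v)" using good[OF v] vC vr by (auto simp: good_def tree_in_graph_def C_def r_def p_def)
      then have "(p v, lab (p v)) \<in> view E lab v" by (simp add: view_iff)
      moreover have "fD (lab (p v)) + 1 = dep C r p v" using fl[OF pC] T.dep_step[OF vC vr] by simp
      moreover have "str E C r p v \<subseteq> insert v (fS (lab (p v)))" using fl[OF pC] T.str_step[OF vC vr] by simp
      ultimately show "\<exists>lp. ((if v = r then v else p v), lp) \<in> view E lab v \<and>
          fD lp + 1 = dep C r p v \<and> str E C r p v \<subseteq> insert v (fS lp)" using vr by auto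
    next
      fix w lw assume "(w, lw) \<in> view E lab v" "w \<noteq> v"
      then have wl: "E v w" "lw = lab w" by (auto simp: view_iff)
      then have wC: "w \<in> C" using closed vC by (auto simp: C_def)
      show "fR lw = r" using fl[OF wC] wl by simp
      show "fD lw \<noteq> dep C r p v" using fl[OF wC] wl T.dep_ne[OF vC wC] by simp
      show "fD lw < dep C r p v \<Longrightarrow> w \<in> str E C r p v" using fl[OF wC] wl T.str_nb[OF vC wC] by simp
    qed
  qed
qed

lemma short: assumes v: "v \<in> {1..n}"
  shows "real (length (lab v)) \<le> (3 * (4 + real_of_int \<bar>\<omega>\<bar>)) * (log 2 (real n) + 1)"
proof -
  define C where "C = component n E v"
  define r where "r = rr v"
  define p where "p = pp v"
  interpret T: et E C r p using et[OF v] by (simp add: C_def r_def p_def)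
  have vC: "v \<in> C" using self[OF v] by (simp add: C_def)
  have L: "Lv v = [r, if v = r then v else p v, dep C r p v] @ sorted_list_of_set (str E C r p v)"
    by (simp add: Lv_def C_def r_def p_def)
  have fins: "finite (str E C r p v)"
    using T.str_sub[OF vC] T.fin by (rule finite_subset)
  have n1: "1 \<le> n" using v by simp
  have Cn: "C \<subseteq> {1..n}" using csub by (simp add: C_def)
  have cardC: "card C \<le> n" using card_mono[OF _ Cn] by simp
  have allle: "\<forall>x\<in>set (Lv v). x \<le> n"
  proof
    fix x assume "x \<in> set (Lv v)"
    then have "x = r \<or> x = v \<or> x = p v \<and> v \<noteq> r \<or> x = dep C r p v \<or> x \<in> str E C r p v"
      using fins by (auto simp: L split: if_splits)
    moreover have "r \<in> C" by (rule T.r_in)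
    moreover have "v \<noteq> r \<Longrightarrow> p v \<in> C" using T.p_in vC by blast
    moreover have "dep C r p v \<le> n" using T.dep_le cardC le_trans by blast
    moreover have "str E C r p v \<subseteq> C" using T.str_sub[OF vC] .
    ultimately show "x \<le> n" using vC Cn by fastforce
  qed
  define B where "B = log 2 (real n) + 1"
  have B1: "1 \<le> B" using n1 by (simp add: B_def)
  have bl: "\<forall>x\<in>set (Lv v). real (length (binl x)) \<le> B"
    using allle binl_log n1 by (simp add: B_def)
  have wl: "width_le E C r p \<omega>" using good[OF v] by (simp add: good_def C_def r_def p_def)
  then have "int (card (str E C r p v)) - 1 \<le> \<omega>" using vC unfolding width_le_def by blast
  then have lenL: "real (length (Lv v)) \<le> 4 + real_of_int \<bar>\<omega>\<bar>"
    by (simp add: L)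
  have "real (length (lab v)) \<le> real (length (Lv v)) * (2*B+1)"
    unfolding lab_def by (rule encL_len[OF bl])
  also have "\<dots> \<le> (4 + real_of_int \<bar>\<omega>\<bar>) * (3 * B)"
    using lenL B1 by (intro mult_mono) auto
  finally show ?thesis by (simp add: B_def algebra_simps)
qed

end

theorem proposition5:
  fixes \<omega> :: int
  shows "pls_log (G_class \<omega>)"
  unfolding pls_log_def
proof (rule exI[of _ "Dver \<omega>"], rule exI[of _ "3 * (4 + real_of_int \<bar>\<omega>\<bar>)"], intro conjI allI impI)
  fix n E assume g: "graph n E" and G: "G_class \<omega> n E"
  interpret cp n E \<omega> using g G by (simp add: cp_def)
  show "\<exists>lab. (\<forall>v\<in>{1..n}. real (length (lab v)) \<le> (3 * (4 + real_of_int \<bar>\<omega>\<bar>)) * (log 2 (real n) + 1)) \<and>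
          (\<forall>v\<in>{1..n}. Dver \<omega> v (view E lab v))"
    using short accept by blast
next
  fix n E lab assume g: "graph n E" and nG: "\<not> G_class \<omega> n E"
  show "\<exists>v\<in>{1..n}. \<not> Dver \<omega> v (view E lab v)"
  proof (rule ccontr)
    assume "\<not> ?thesis"
    then have "sd n E lab \<omega>" using g by (simp add: sd_def)
    then have "G_class \<omega> n E" by (rule sd.sound)
    with nG show False by simp
  qed
qed

end
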